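(* Let $c>0$ be a fixed constant. Let $(u_n)_{n\ge1}$ be a sequence of positive real numbers and let $A,B>0$, $\alpha\in(0,\frac12)$ be such that for all integers $a,b\ge1$, $$u_{a+b}\le(u_a+u_b+A)+(a^{2\alpha}+b^{2\alpha})B^2+(a^\alpha+b^\alpha)B(u_a+u_b+A)^{1/2}+cu_a^{1/2}+cu_b^{1/2}.$$ Then there is a constant $c_\alpha$ depending only on $\alpha$ (and on $c$) such that $u_n\le c_\alpha(1+u_1+A+B^2)\,n$ for all $n\ge1$. *)

theory Defs
  imports Complex_Main
begin

end

theory Submission
  imports Defs
begin

lemma delta_pos:
  fixes \<gamma> :: real assumes "\<gamma> < 1"
  shows "(2/3::real) powr (\<gamma> - 1) > 1"
proof -
  have p: "(2/3::real) powr (\<gamma> - 1) * (3/2) powr (\<gamma> - 1) = 1"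
    by (simp add: powr_mult[symmetric])
  have q: "(3/2::real) powr (\<gamma> - 1) < 1"
    using assms powr_less_cancel_iff[of "3/2::real" "\<gamma> - 1" 0] by simp
  have r: "(3/2::real) powr (\<gamma> - 1) > 0" by simp
  show ?thesis
  proof (rule ccontr)
    assume "\<not> ?thesis"
    hence "(2/3::real) powr (\<gamma> - 1) \<le> 1" by simp
    hence "(2/3::real) powr (\<gamma> - 1) * (3/2) powr (\<gamma> - 1) \<le> 1 * (3/2) powr (\<gamma> - 1)"
      using r by (intro mult_right_mono) auto
    hence "(2/3::real) powr (\<gamma> - 1) * (3/2) powr (\<gamma> - 1) < 1"
      using q by linarith
    with p show False by simp
  qed
qed

lemma split_gain:
  fixes a b n :: real and \<gamma> :: real
  assumes "a \<ge> 1" "b \<ge> 1" "a + b = n" "a \<le> 2*n/3" "b \<le> 2*n/3" "\<gamma> \<le> 1"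
  shows "a powr \<gamma> + b powr \<gamma> \<ge> (2/3) powr (\<gamma> - 1) * n powr \<gamma>"
proof -
  have npos: "n > 0" using assms by simp
  have key: "x powr \<gamma> \<ge> x * ((2/3) powr (\<gamma> - 1) * n powr (\<gamma> - 1))"
    if "x \<ge> 1" "x \<le> 2*n/3" for x :: real
  proof -
    have "x powr \<gamma> = x * x powr (\<gamma> - 1)"
      using that powr_mult_base[of x "\<gamma> - 1"] by simp
    moreover have "x powr (\<gamma> - 1) \<ge> (2*n/3) powr (\<gamma> - 1)"
      using that assms by (intro powr_mono2') auto
    moreover have "(2*n/3) powr (\<gamma> - 1) = (2/3) powr (\<gamma> - 1) * n powr (\<gamma> - 1)"
      using npos by (simp add: powr_mult[symmetric])
    ultimately show ?thesis using that by (simp add: mult_left_mono)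
  qed
  have "a powr \<gamma> + b powr \<gamma> \<ge> (a + b) * ((2/3) powr (\<gamma> - 1) * n powr (\<gamma> - 1))"
  proof -
    have "(a + b) * ((2/3) powr (\<gamma> - 1) * n powr (\<gamma> - 1)) = a * ((2/3) powr (\<gamma> - 1) * n powr (\<gamma> - 1)) + b * ((2/3) powr (\<gamma> - 1) * n powr (\<gamma> - 1))"
      by (simp add: distrib_right)
    then show ?thesis using key[of a] key[of b] assms by linarith
  qed
  also have "(a + b) * ((2/3) powr (\<gamma> - 1) * n powr (\<gamma> - 1)) = (2/3) powr (\<gamma> - 1) * (n * n powr (\<gamma> - 1))"
    using assms by (simp add: algebra_simps)
  also have "n * n powr (\<gamma> - 1) = n powr \<gamma>"
    using npos powr_mult_base[of n "\<gamma> - 1"] by simp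
  finally show ?thesis .
qed

lemma step:
  fixes a b n M K D c \<alpha> \<gamma> A B ua ub :: real
  assumes ab: "a \<ge> 1" "b \<ge> 1" "a + b = n" "a \<le> 2*n/3" "b \<le> 2*n/3"
    and IHa: "ua \<le> M*(K*a - D*a powr \<gamma>)" and IHb: "ub \<le> M*(K*b - D*b powr \<gamma>)"
    and pos: "ua > 0" "ub > 0" "A > 0" "B > 0"
    and M: "M \<ge> 1" "A \<le> M" "B^2 \<le> M"
    and KD: "K \<ge> 1" "D \<ge> 0" "c > 0"
    and al: "0 < \<alpha>" "\<alpha> < 1/2" "\<alpha> + 1/2 \<le> \<gamma>" "\<gamma> \<le> 1"
    and Dd: "D*((2/3) powr (\<gamma> - 1) - 1) \<ge> (7 + 2*c)*sqrt K"
  shows "(ua + ub + A) + (a powr (2*\<alpha>) + b powr (2*\<alpha>))*B^2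
          + (a powr \<alpha> + b powr \<alpha>)*B*sqrt (ua + ub + A) + c*sqrt ua + c*sqrt ub
        \<le> M*(K*n - D*n powr \<gamma>)"
proof -
  define N where "N = n powr (\<alpha> + 1/2)"
  have n1: "n \<ge> 1" using ab by simp
  have N1: "N \<ge> 1" unfolding N_def using n1 al by (simp add: ge_one_powr_ge_zero)
  have Nn: "N \<le> n powr \<gamma>" unfolding N_def using n1 al by (intro powr_mono) auto
  have sK1: "sqrt K \<ge> 1" using KD by simp
  have sMsM: "sqrt M * sqrt M = M" using M by simp
  have "sqrt M * 1 \<le> sqrt M * sqrt M" using M by (intro mult_left_mono) auto
  hence sMM: "sqrt M \<le> M" using sMsM by simp
  have snN: "sqrt n \<le> N"
  proof -
    have "sqrt n = n powr (1/2)" using n1 by (simp add: powr_half_sqrt)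
    also have "\<dots> \<le> N" unfolding N_def using n1 al by (intro powr_mono) auto
    finally show ?thesis .
  qed
  have aga: "0 \<le> D * a powr \<gamma>" "0 \<le> D * b powr \<gamma>" using KD by auto
  have "M*(K*a - D*a powr \<gamma>) \<le> M*(K*a)" using aga M by (intro mult_left_mono) auto
  hence h1: "ua \<le> M*K*a" using IHa by simp
  have "M*(K*b - D*b powr \<gamma>) \<le> M*(K*b)" using aga M by (intro mult_left_mono) auto
  hence h2: "ub \<le> M*K*b" using IHb by simp
  have "1*1 \<le> K*n" using KD n1 by (intro mult_mono) auto
  hence "M*1 \<le> M*(K*n)" using M by (intro mult_left_mono) auto
  hence MKn: "M*K*n \<ge> M" by simp
  have hS: "ua + ub + A \<le> 4*K*M*n"
  proof -
    have "M*K*a + M*K*b = M*K*n" unfolding ab(3)[symmetric] by (simp add: algebra_simps)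
    moreover have "M*K*n \<ge> 0" using MKn M by linarith
    moreover have "4*K*M*n = 4*(M*K*n)" by simp
    ultimately show ?thesis using h1 h2 M MKn by linarith
  qed
  have hsqS: "sqrt (ua + ub + A) \<le> 2 * sqrt K * sqrt M * sqrt n"
  proof -
    have "sqrt (ua + ub + A) \<le> sqrt (4*K*M*n)" using hS by simp
    also have "sqrt (4*K*M*n) = 2 * sqrt K * sqrt M * sqrt n"
      by (simp add: real_sqrt_mult)
    finally show ?thesis .
  qed
  have hal: "a powr \<alpha> + b powr \<alpha> \<le> 2 * n powr \<alpha>"
  proof -
    have "a powr \<alpha> \<le> n powr \<alpha>" using ab al by (intro powr_mono2) auto
    moreover have "b powr \<alpha> \<le> n powr \<alpha>" using ab al by (intro powr_mono2) auto
    ultimately show ?thesis by simp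
  qed
  have hB: "B \<le> sqrt M" using M by (simp add: real_le_rsqrt)
  have na: "n powr \<alpha> * sqrt n = N"
    unfolding N_def using n1 by (simp add: powr_add powr_half_sqrt)
  have hT3: "(a powr \<alpha> + b powr \<alpha>)*B*sqrt (ua + ub + A) \<le> 4 * sqrt K * M * N"
  proof -
    have "(a powr \<alpha> + b powr \<alpha>)*B*sqrt (ua + ub + A)
        \<le> (2 * n powr \<alpha>) * sqrt M * (2 * sqrt K * sqrt M * sqrt n)"
      using hal hB hsqS pos M by (intro mult_mono) (auto intro: add_nonneg_nonneg)
    also have "\<dots> = 4 * sqrt K * (sqrt M * sqrt M) * (n powr \<alpha> * sqrt n)"
      by (simp add: algebra_simps)
    also have "\<dots> = 4 * sqrt K * M * N" using sMsM na by simp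
    finally show ?thesis .
  qed
  have hT2: "(a powr (2*\<alpha>) + b powr (2*\<alpha>))*B^2 \<le> 2 * M * N"
  proof -
    have "a powr (2*\<alpha>) \<le> n powr (2*\<alpha>)" using ab al by (intro powr_mono2) auto
    moreover have "b powr (2*\<alpha>) \<le> n powr (2*\<alpha>)" using ab al by (intro powr_mono2) auto
    moreover have "n powr (2*\<alpha>) \<le> N" unfolding N_def using n1 al by (intro powr_mono) auto
    ultimately have "a powr (2*\<alpha>) + b powr (2*\<alpha>) \<le> 2 * N" by simp
    hence "(a powr (2*\<alpha>) + b powr (2*\<alpha>))*B^2 \<le> (2*N) * M"
      using M N1 by (intro mult_mono) auto
    thus ?thesis by (simp add: mult.commute mult.left_commute)
  qed
  have hc: "sqrt x \<le> sqrt K * M * N" if "x \<le> M*K*n" for x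
  proof -
    have "sqrt x \<le> sqrt (M*K*n)" using that by simp
    also have "\<dots> = sqrt M * sqrt K * sqrt n" by (simp add: real_sqrt_mult)
    also have "\<dots> \<le> M * sqrt K * N"
      using sMM snN M KD n1 by (intro mult_mono) auto
    finally show ?thesis by (simp add: mult.commute)
  qed
  have ua_n: "ua \<le> M*K*n" and ub_n: "ub \<le> M*K*n"
  proof -
    have "M*K*a \<le> M*K*n" "M*K*b \<le> M*K*n" using ab M KD by (auto intro!: mult_left_mono)
    thus "ua \<le> M*K*n" "ub \<le> M*K*n" using h1 h2 by auto
  qed
  have hcua: "c * sqrt ua \<le> c * (sqrt K * M * N)" using hc[OF ua_n] KD by (intro mult_left_mono) auto
  have hcub: "c * sqrt ub \<le> c * (sqrt K * M * N)" using hc[OF ub_n] KD by (intro mult_left_mono) auto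
  have "M*1 \<le> M * N" using M N1 by (intro mult_left_mono) auto
  hence hA: "A \<le> M * N" using M by linarith
  have E: "A + (a powr (2*\<alpha>) + b powr (2*\<alpha>))*B^2
          + (a powr \<alpha> + b powr \<alpha>)*B*sqrt (ua + ub + A) + c*sqrt ua + c*sqrt ub
        \<le> M * N * ((7 + 2*c) * sqrt K)"
  proof -
    have MN: "M * N \<ge> 0" using M N1 by simp
    have "M*N \<le> M*N*sqrt K" using MN sK1 by (simp add: mult_le_cancel_left1)
    hence "A + 2*M*N + 4 * sqrt K * M * N + 2 * (c * (sqrt K * M * N)) \<le> M*N*sqrt K + 2*M*N*sqrt K + 4 * sqrt K * M * N + 2 * (c * (sqrt K * M * N))"
      using hA by (simp add: algebra_simps)
    also have "\<dots> = M * N * ((7 + 2*c) * sqrt K)" by (simp add: algebra_simps)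
    finally have "A + 2*M*N + 4 * sqrt K * M * N + 2 * (c * (sqrt K * M * N)) \<le> M * N * ((7 + 2*c) * sqrt K)" .
    thus ?thesis using hT2 hT3 hcua hcub by linarith
  qed
  have gain: "a powr \<gamma> + b powr \<gamma> \<ge> (2/3) powr (\<gamma> - 1) * n powr \<gamma>"
    using split_gain[OF ab al(4)] .
  define \<delta> where "\<delta> = (2/3::real) powr (\<gamma> - 1) - 1"
  have E2: "M * N * ((7 + 2*c) * sqrt K) \<le> M * n powr \<gamma> * (D * \<delta>)"
  proof -
    have X: "(7 + 2*c) * sqrt K \<ge> 0" using KD by simp
    have "M * N \<le> M * n powr \<gamma>" using Nn M by (intro mult_left_mono) auto
    hence "M * N * ((7 + 2*c) * sqrt K) \<le> M * n powr \<gamma> * ((7 + 2*c) * sqrt K)"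
      using X by (intro mult_right_mono) auto
    also have "\<dots> \<le> M * n powr \<gamma> * (D * \<delta>)"
      using Dd M unfolding \<delta>_def by (intro mult_left_mono) auto
    finally show ?thesis .
  qed
  have G: "M * (D * (a powr \<gamma> + b powr \<gamma>)) \<ge> M * (D * ((1 + \<delta>) * n powr \<gamma>))"
    using gain M KD unfolding \<delta>_def by (intro mult_left_mono) auto
  have "(ua + ub + A) + (a powr (2*\<alpha>) + b powr (2*\<alpha>))*B^2
          + (a powr \<alpha> + b powr \<alpha>)*B*sqrt (ua + ub + A) + c*sqrt ua + c*sqrt ub
        \<le> M*(K*a - D*a powr \<gamma>) + M*(K*b - D*b powr \<gamma>) + M * n powr \<gamma> * (D * \<delta>)"
    using IHa IHb E E2 by linarith
  also have "\<dots> = M*K*(a+b) - M * (D * (a powr \<gamma> + b powr \<gamma>)) + M * n powr \<gamma> * (D * \<delta>)"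
    by (simp add: algebra_simps)
  also have "\<dots> = M*K*n - M * (D * (a powr \<gamma> + b powr \<gamma>)) + M * n powr \<gamma> * (D * \<delta>)"
    using ab(3) by simp
  also have "\<dots> \<le> M*K*n - M * (D * ((1 + \<delta>) * n powr \<gamma>)) + M * n powr \<gamma> * (D * \<delta>)"
    using G by linarith
  also have "\<dots> = M*(K*n - D*n powr \<gamma>)" by (simp add: algebra_simps)
  finally show ?thesis .
qed

theorem mainTheorem13:
  fixes c :: real and \<alpha> :: real
  assumes "c > 0" and "0 < \<alpha>" and "\<alpha> < 1/2"
  shows "\<exists>C::real. \<forall>(u::nat \<Rightarrow> real) (A::real) (B::real).
           ((\<forall>n\<ge>1. u n > 0) \<and> A > 0 \<and> B > 0 \<and>
            (\<forall>a b::nat. a \<ge> 1 \<longrightarrow> b \<ge> 1 \<longrightarrow>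
               u (a + b) \<le> (u a + u b + A)
                 + (real a powr (2*\<alpha>) + real b powr (2*\<alpha>)) * B^2
                 + (real a powr \<alpha> + real b powr \<alpha>) * B * sqrt (u a + u b + A)
                 + c * sqrt (u a) + c * sqrt (u b)))
           \<longrightarrow> (\<forall>n::nat. n \<ge> 1 \<longrightarrow> u n \<le> C * (1 + u 1 + A + B^2) * real n)"
proof -
  define \<gamma> where "\<gamma> = \<alpha>/2 + 3/4"
  have g1: "\<gamma> < 1" "\<alpha> + 1/2 \<le> \<gamma>" using assms unfolding \<gamma>_def by auto
  define \<delta> where "\<delta> = (2/3::real) powr (\<gamma> - 1) - 1"
  have dpos: "\<delta> > 0" unfolding \<delta>_def using delta_pos[OF g1(1)] by simp
  define P where "P = 7 + 2*c"
  have Ppos: "P > 0" unfolding P_def using assms by simp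
  define s where "s = P/\<delta> + 1"
  have s1: "s \<ge> 1" unfolding s_def using Ppos dpos by simp
  define K where "K = s^2"
  define D where "D = P*s/\<delta>"
  have sK: "sqrt K = s" unfolding K_def using s1 by simp
  have K1: "K \<ge> 1" unfolding K_def using s1 by (simp add: one_le_power)
  have D0: "D \<ge> 0" unfolding D_def using Ppos dpos s1 by simp
  have Dd: "D*((2/3) powr (\<gamma> - 1) - 1) \<ge> (7 + 2*c)*sqrt K"
    unfolding D_def sK using dpos by (simp add: \<delta>_def[symmetric] P_def)
  have KD: "K - D = s"
  proof -
    have "K - D = s * (s - P/\<delta>)" unfolding K_def D_def by (simp add: power2_eq_square algebra_simps)
    also have "s - P/\<delta> = 1" unfolding s_def by simp
    finally show ?thesis by simp
  qed
  show ?thesis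
  proof (rule exI[of _ K], (rule allI)+, rule impI)
    fix u :: "nat \<Rightarrow> real" and A B :: real
    assume H: "(\<forall>n\<ge>1. u n > 0) \<and> A > 0 \<and> B > 0 \<and>
            (\<forall>a b::nat. a \<ge> 1 \<longrightarrow> b \<ge> 1 \<longrightarrow>
               u (a + b) \<le> (u a + u b + A)
                 + (real a powr (2*\<alpha>) + real b powr (2*\<alpha>)) * B^2
                 + (real a powr \<alpha> + real b powr \<alpha>) * B * sqrt (u a + u b + A)
                 + c * sqrt (u a) + c * sqrt (u b))"
    define M where "M = 1 + u 1 + A + B^2"
    have upos: "\<And>n. n \<ge> 1 \<Longrightarrow> u n > 0" using H by auto
    have Apos: "A > 0" and Bpos: "B > 0" using H by auto
    have rec: "\<And>a b. a \<ge> 1 \<Longrightarrow> b \<ge> 1 \<Longrightarrow>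
               u (a + b) \<le> (u a + u b + A)
                 + (real a powr (2*\<alpha>) + real b powr (2*\<alpha>)) * B^2
                 + (real a powr \<alpha> + real b powr \<alpha>) * B * sqrt (u a + u b + A)
                 + c * sqrt (u a) + c * sqrt (u b)" using H by blast
    have u1: "u 1 > 0" using upos by simp
    have B2: "B^2 \<ge> 0" by simp
    have M1: "M \<ge> 1" "A \<le> M" "B^2 \<le> M" "u 1 \<le> M" unfolding M_def using u1 Apos B2 by auto
    have main: "\<forall>n. n \<ge> 1 \<longrightarrow> u n \<le> M*(K*real n - D*real n powr \<gamma>)"
    proof (rule allI, induct_tac n rule: less_induct)
      fix n :: nat
      assume IH: "\<And>m. m < n \<Longrightarrow> m \<ge> 1 \<longrightarrow> u m \<le> M*(K*real m - D*real m powr \<gamma>)"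
      show "n \<ge> 1 \<longrightarrow> u n \<le> M*(K*real n - D*real n powr \<gamma>)"
      proof
        assume n1: "n \<ge> 1"
        show "u n \<le> M*(K*real n - D*real n powr \<gamma>)"
        proof (cases "n = 1")
          case True
          have Ms: "M * 1 \<le> M * s" using M1 s1 by (intro mult_left_mono) auto
          have e: "K*real n - D*real n powr \<gamma> = s" using True KD by simp
          have "u n \<le> M" using True M1 by simp
          thus ?thesis unfolding e using Ms by linarith
        next
          case False
          define a where "a = n div 2"
          define b where "b = n - a"
          have nat_facts: "a \<ge> 1" "b \<ge> 1" "a < n" "b < n" "a + b = n" "3*a \<le> 2*n" "3*b \<le> 2*n"
            using False n1 unfolding a_def b_def by auto
          have ra: "real a \<ge> 1" "real b \<ge> 1" "real a + real b = real n"
            "real a \<le> 2*real n/3" "real b \<le> 2*real n/3"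
            using nat_facts by (auto simp flip: of_nat_add)
          have IHa: "u a \<le> M*(K*real a - D*real a powr \<gamma>)" using IH nat_facts by auto
          have IHb: "u b \<le> M*(K*real b - D*real b powr \<gamma>)" using IH nat_facts by auto
          have "u n = u (a + b)" using nat_facts by simp
          also have "\<dots> \<le> (u a + u b + A)
                 + (real a powr (2*\<alpha>) + real b powr (2*\<alpha>)) * B^2
                 + (real a powr \<alpha> + real b powr \<alpha>) * B * sqrt (u a + u b + A)
                 + c * sqrt (u a) + c * sqrt (u b)" using rec nat_facts by blast
          also have "\<dots> \<le> M*(K*real n - D*real n powr \<gamma>)"
            using step[OF ra IHa IHb upos[of a] upos[of b] Apos Bpos M1(1-3) K1 D0 assms(1) assms(2) assms(3) g1(2) _ Dd]
              nat_facts g1 by simp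
          finally show ?thesis .
        qed
      qed
    qed
    show "\<forall>n::nat. n \<ge> 1 \<longrightarrow> u n \<le> K * (1 + u 1 + A + B^2) * real n"
    proof (intro allI impI)
      fix n :: nat assume n1: "n \<ge> 1"
      have "0 \<le> M * (D * real n powr \<gamma>)" using M1 D0 by simp
      hence "M*(K*real n - D*real n powr \<gamma>) \<le> M*(K*real n)" by (simp add: algebra_simps)
      moreover have "u n \<le> M*(K*real n - D*real n powr \<gamma>)" using main n1 by blast
      moreover have "M*(K*real n) = K * (1 + u 1 + A + B^2) * real n" unfolding M_def by simp
      ultimately show "u n \<le> K * (1 + u 1 + A + B^2) * real n" by linarith
    qed
  qed
qed

end
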